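(* For every integer $n>2$ there exists a finite Blaschke product $B$ of degree $n$ with $M(B)\le n+1$ and $m(B)<n-1$.
   Context: A finite Blaschke product of degree $n$ is $B(z)=\alpha\prod_{k=1}^n \frac{z-a_k}{1-\overline{a_k}z}$ with $a_k\in\mathbb D=\{|z|<1\}$, $\alpha\in\mathbb T=\{|z|=1\}$; $M(B)=\sup_{|z|=1}|B'(z)|$, $m(B)=\inf_{|z|=1}|B'(z)|$. *)

theory Defs
  imports "HOL-Analysis.Analysis"
begin

definition blaschke :: "complex \<Rightarrow> complex list \<Rightarrow> complex \<Rightarrow> complex" where
  "blaschke \<alpha> as z = \<alpha> * (\<Prod>a\<leftarrow>as. (z - a) / (1 - cnj a * z))"

definition is_blaschke :: "nat \<Rightarrow> (complex \<Rightarrow> complex) \<Rightarrow> bool" where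
  "is_blaschke n B \<longleftrightarrow> (\<exists>\<alpha> as. norm \<alpha> = 1 \<and> length as = n \<and>
      (\<forall>a\<in>set as. norm a < 1) \<and> B = blaschke \<alpha> as)"

definition bl_M :: "(complex \<Rightarrow> complex) \<Rightarrow> real" where
  "bl_M B = (SUP z\<in>sphere 0 1. norm (deriv B z))"

definition bl_m :: "(complex \<Rightarrow> complex) \<Rightarrow> real" where
  "bl_m B = (INF z\<in>sphere 0 1. norm (deriv B z))"

end

theory Submission
  imports Defs
begin

definition Pk :: "complex \<Rightarrow> complex \<Rightarrow> real" where
  "Pk z a = (1 - (norm a)^2) / (norm (z - a))^2"

lemma blaschke_Cons: "blaschke \<alpha> (a#as) = (\<lambda>z. (z - a) / (1 - cnj a * z) * blaschke \<alpha> as z)"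
  by (auto simp: blaschke_def fun_eq_iff)

lemma blaschke_Nil: "blaschke \<alpha> [] = (\<lambda>z. \<alpha>)"
  by (auto simp: blaschke_def fun_eq_iff)

lemma mob_deriv:
  assumes z: "norm z = 1" and a: "norm a < 1"
  shows "((\<lambda>w. (w - a) / (1 - cnj a * w)) has_field_derivative
           ((z - a) / (1 - cnj a * z) * of_real (Pk z a) / z)) (at z)"
proof -
  have zc: "z * cnj z = 1" using z by (metis complex_norm_square mult.commute norm_one of_real_1 power_one)
  have za: "z - a \<noteq> 0" using z a by auto
  have d0: "1 - cnj a * z \<noteq> 0"
  proof
    assume "1 - cnj a * z = 0"
    then have "norm (cnj a * z) = 1" by (metis norm_one right_minus_eq)
    then show False using z a by (simp add: norm_mult)
  qed
  have e1: "1 - cnj a * z = z * cnj (z - a)" using zc by (simp add: algebra_simps)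
  have e2: "complex_of_real ((norm (z - a))^2) = (z - a) * cnj (z - a)"
    by (rule complex_norm_square)
  have e3: "complex_of_real ((norm a)^2) = a * cnj a"
    by (rule complex_norm_square)
  have zn: "z \<noteq> 0" using z by auto
  have cza: "cnj (z - a) \<noteq> 0" using za by simp
  have D: "((\<lambda>w. (w - a) / (1 - cnj a * w)) has_field_derivative
           ((1 * (1 - cnj a * z) - (z - a) * (- cnj a * 1)) / (1 - cnj a * z)^2)) (at z)"
    unfolding power2_eq_square
    by (rule DERIV_divide[where g="\<lambda>w. 1 - cnj a * w"]) (use d0 in \<open>auto intro!: derivative_eq_intros\<close>)
  have num: "1 * (1 - cnj a * z) - (z - a) * (- cnj a * 1) = 1 - a * cnj a"
    by (simp add: algebra_simps)
  have fld: "\<And>(u::complex) v w c. u \<noteq> 0 \<Longrightarrow> v \<noteq> 0 \<Longrightarrow> w \<noteq> 0 \<Longrightarrow>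
     c / (u * w)^2 = v / (u * w) * (c / (v * w)) / u"
    by (simp add: field_simps power2_eq_square)
  have "(1 * (1 - cnj a * z) - (z - a) * (- cnj a * 1)) / (1 - cnj a * z)^2
       = (z - a) / (1 - cnj a * z) * of_real (Pk z a) / z"
    unfolding Pk_def of_real_divide of_real_diff e2 of_real_1 e3 num unfolding e1
    by (rule fld[OF zn za cza])
  with D show ?thesis by simp
qed

lemma mob_norm:
  assumes z: "norm z = 1" and a: "norm a < 1"
  shows "norm ((z - a) / (1 - cnj a * z)) = 1"
proof -
  have zc: "z * cnj z = 1" using z by (metis complex_norm_square norm_one of_real_1 power_one)
  have za: "z - a \<noteq> 0" using z a by auto
  have e1: "1 - cnj a * z = z * cnj (z - a)" using zc by (simp add: algebra_simps)
  have "norm (cnj (z - a)) = norm (z - a)" by (rule complex_mod_cnj)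
  then show ?thesis unfolding e1 using za z by (simp add: norm_mult norm_divide del: complex_cnj_diff)
qed

lemma bl_norm:
  assumes z: "norm z = 1" and as: "\<forall>a\<in>set as. norm a < 1"
  shows "norm (blaschke \<alpha> as z) = norm \<alpha>"
  using as
proof (induction as)
  case Nil then show ?case by (simp add: blaschke_Nil)
next
  case (Cons a as)
  have "blaschke \<alpha> (a#as) z = ((z - a) / (1 - cnj a * z)) * blaschke \<alpha> as z"
    by (simp add: blaschke_Cons)
  then have "norm (blaschke \<alpha> (a#as) z) = norm ((z - a) / (1 - cnj a * z)) * norm (blaschke \<alpha> as z)"
    by (simp only: norm_mult)
  then show ?case using Cons mob_norm[OF z] by simp
qed

lemma bl_deriv:
  assumes z: "norm z = 1" and as: "\<forall>a\<in>set as. norm a < 1"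
  shows "(blaschke \<alpha> as has_field_derivative
            (blaschke \<alpha> as z * of_real (\<Sum>a\<leftarrow>as. Pk z a) / z)) (at z)"
  using as
proof (induction as)
  case Nil then show ?case by (simp add: blaschke_Nil)
next
  case (Cons a as)
  have a: "norm a < 1" and as': "\<forall>a\<in>set as. norm a < 1" using Cons.prems by auto
  note IH = Cons.IH[OF as']
  have D: "((\<lambda>w. (w - a) / (1 - cnj a * w) * blaschke \<alpha> as w) has_field_derivative
     (z - a) / (1 - cnj a * z) * (blaschke \<alpha> as z * of_real (\<Sum>a\<leftarrow>as. Pk z a) / z)
     + ((z - a) / (1 - cnj a * z) * of_real (Pk z a) / z) * blaschke \<alpha> as z) (at z)"
    by (rule DERIV_mult'[OF mob_deriv[OF z a] IH])
  have alg: "\<And>f g P S z::complex. z \<noteq> 0 \<Longrightarrow> f * (g * S / z) + f * P / z * g = f * g * (P + S) / z"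
    by (simp add: field_simps)
  have zn: "z \<noteq> 0" using z by auto
  show ?case unfolding blaschke_Cons
    by (rule DERIV_cong[OF D], simp only: alg[OF zn]) simp
qed

lemma Pk_nonneg: "norm a < 1 \<Longrightarrow> Pk z a \<ge> 0"
  unfolding Pk_def by (intro divide_nonneg_nonneg) (auto simp: abs_square_le_1 power_le_one)

lemma sum_list_Pk_nonneg: "\<forall>a\<in>set as. norm a < 1 \<Longrightarrow> (\<Sum>a\<leftarrow>as. Pk z a) \<ge> 0"
  by (induction as) (auto intro: add_nonneg_nonneg Pk_nonneg)

lemma bl_deriv_norm:
  assumes z: "norm z = 1" and as: "\<forall>a\<in>set as. norm a < 1" and al: "norm \<alpha> = 1"
  shows "norm (deriv (blaschke \<alpha> as) z) = (\<Sum>a\<leftarrow>as. Pk z a)"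
proof -
  have "deriv (blaschke \<alpha> as) z = blaschke \<alpha> as z * of_real (\<Sum>a\<leftarrow>as. Pk z a) / z"
    by (rule DERIV_imp_deriv[OF bl_deriv[OF z as]])
  then show ?thesis using bl_norm[OF z as] al z sum_list_Pk_nonneg[OF as, of z]
    by (simp add: norm_mult norm_divide)
qed

lemma poly_pos:
  fixes y :: real assumes "-1 \<le> y"
  shows "32000*y^3 + 38000*y^2 + 10920*y + 6573 > 0"
proof -
  define u where "u = y + 1"
  have u: "u \<ge> 0" using assms u_def by simp
  have q: "32000*u^2 - 58000*u + 30920 \<ge> 0"
  proof -
    have "32000*u^2 - 58000*u + 30920 = 32000*(u - 29/32)^2 + 18555/4"
      by (simp add: power2_eq_square algebra_simps)
    moreover have "(u - 29/32)^2 \<ge> 0" by simp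
    ultimately show ?thesis by linarith
  qed
  have "32000*y^3 + 38000*y^2 + 10920*y + 6573 = u*(32000*u^2 - 58000*u + 30920) + 1653"
    unfolding u_def by (simp add: power2_eq_square power3_eq_cube algebra_simps)
  moreover have "u*(32000*u^2 - 58000*u + 30920) \<ge> 0" using u q by simp
  ultimately show ?thesis by linarith
qed

lemma key_ineq:
  fixes x y :: real assumes xy: "x^2 + y^2 = 1"
  shows "21/(29-20*x) + 21/(29+20*x) + 21/(29+20*y) \<le> 4"
proof -
  have "x^2 \<le> 1" "y^2 \<le> 1" using xy zero_le_power2[of x] zero_le_power2[of y] by linarith+
  then have xb: "\<bar>x\<bar> \<le> 1" and yb: "\<bar>y\<bar> \<le> 1" by (simp_all add: abs_square_le_1)
  have d1: "29-20*x > 0" "29+20*x > 0" "29+20*y > 0" using xb yb by auto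
  have d2: "441 + 400*y^2 > 0" using zero_le_power2[of y] by linarith
  have x2: "x^2 = 1 - y^2" using xy by simp
  have h: "21/(29-20*x) + 21/(29+20*x) = 1218/(441+400*y^2)"
  proof -
    have "(29-20*x)*(29+20*x) = 441+400*y^2" using x2 by (simp add: algebra_simps power2_eq_square)
    then show ?thesis using d1 d2 by (simp add: add_frac_eq)
  qed
  have p: "32000*y^3 + 38000*y^2 + 10920*y + 6573 > 0" using poly_pos yb by simp
  have poly: "1218*(29+20*y) + 21*(441+400*y^2) \<le> 4*((441+400*y^2)*(29+20*y))"
  proof -
    have "4*((441+400*y^2)*(29+20*y)) - (1218*(29+20*y) + 21*(441+400*y^2))
          = 32000*y^3 + 38000*y^2 + 10920*y + 6573"
      by (simp add: algebra_simps power2_eq_square power3_eq_cube)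
    then show ?thesis using p by linarith
  qed
  have "1218/(441+400*y^2) + 21/(29+20*y) = (1218*(29+20*y) + 21*(441+400*y^2)) / ((441+400*y^2)*(29+20*y))"
    using d1 d2 by (simp add: add_frac_eq)
  also have "\<dots> \<le> 4"
    using poly d1 d2 by (simp add: pos_divide_le_eq)
  finally have "1218/(441+400*y^2) + 21/(29+20*y) \<le> 4" .
  then show ?thesis using h by simp
qed

lemma Pk_zero: "norm z = 1 \<Longrightarrow> Pk z 0 = 1"
  by (simp add: Pk_def)

lemma norm_sq_unit: "norm z = 1 \<Longrightarrow> (Re z)^2 + (Im z)^2 = 1"
  using cmod_power2[of z] by simp

lemma Pk1: assumes "norm z = 1" shows "Pk z (2/5) = 21/(29 - 20 * Re z)"
proof -
  have "(norm (z - 2/5))^2 = (Re z - 2/5)^2 + (Im z)^2" by (simp add: cmod_power2)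
  also have "\<dots> = (29 - 20 * Re z)/25" using norm_sq_unit[OF assms]
    by (simp add: power2_eq_square algebra_simps)
  finally show ?thesis unfolding Pk_def by (simp add: norm_divide power2_eq_square)
qed

lemma Pk2: assumes "norm z = 1" shows "Pk z (-(2/5)) = 21/(29 + 20 * Re z)"
proof -
  have "(norm (z - -(2/5)))^2 = (Re z + 2/5)^2 + (Im z)^2" by (simp add: cmod_power2)
  also have "\<dots> = (29 + 20 * Re z)/25" using norm_sq_unit[OF assms]
    by (simp add: power2_eq_square algebra_simps)
  finally show ?thesis unfolding Pk_def by (simp add: norm_divide power2_eq_square)
qed

lemma Pk3: assumes "norm z = 1" shows "Pk z (-(2/5)*\<i>) = 21/(29 + 20 * Im z)"
proof -
  have "(norm (z - -(2/5)*\<i>))^2 = (Re z)^2 + (Im z + 2/5)^2" by (simp add: cmod_power2)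
  also have "\<dots> = (29 + 20 * Im z)/25" using norm_sq_unit[OF assms]
    by (simp add: power2_eq_square algebra_simps)
  finally show ?thesis unfolding Pk_def by (simp add: norm_mult norm_divide power2_eq_square)
qed

theorem mainTheorem5:
  fixes n :: nat
  assumes "n > 2"
  shows "\<exists>B. is_blaschke n B \<and> bl_M B \<le> real n + 1 \<and> bl_m B < real n - 1"
proof -
  define as :: "complex list" where "as = [2/5, -(2/5), -(2/5)*\<i>] @ replicate (n-3) 0"
  define B where "B = blaschke 1 as"
  have as: "\<forall>a\<in>set as. norm a < 1" unfolding as_def by (auto simp: norm_mult norm_divide)
  have len: "length as = n" unfolding as_def using assms by simp
  have isb: "is_blaschke n B" unfolding is_blaschke_def B_def using as len by (intro exI[of _ 1] exI[of _ as]) simp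
  have S: "norm (deriv B z) = 21/(29 - 20 * Re z) + 21/(29 + 20 * Re z) + 21/(29 + 20 * Im z) + real (n-3)"
    if z: "norm z = 1" for z
  proof -
    have "norm (deriv B z) = (\<Sum>a\<leftarrow>as. Pk z a)"
      unfolding B_def by (rule bl_deriv_norm[OF z as]) simp
    also have "\<dots> = Pk z (2/5) + (Pk z (-(2/5)) + (Pk z (-(2/5)*\<i>) + real (n-3)))"
      unfolding as_def using Pk_zero[OF z] by (simp add: sum_list_replicate)
    finally show ?thesis using Pk1[OF z] Pk2[OF z] Pk3[OF z] by simp
  qed
  have M: "bl_M B \<le> real n + 1"
    unfolding bl_M_def
  proof (rule cSUP_least)
    show "sphere (0::complex) 1 \<noteq> {}" by (simp add: sphere_eq_empty)
  next
    fix z :: complex assume "z \<in> sphere 0 1"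
    then have z: "norm z = 1" by simp
    have "21/(29 - 20 * Re z) + 21/(29 + 20 * Re z) + 21/(29 + 20 * Im z) \<le> 4"
      by (rule key_ineq[OF norm_sq_unit[OF z]])
    then show "norm (deriv B z) \<le> real n + 1" using S[OF z] assms by simp
  qed
  have m: "bl_m B < real n - 1"
  proof -
    have iz: "\<i> \<in> sphere (0::complex) 1" by simp
    have "bl_m B \<le> norm (deriv B \<i>)"
      unfolding bl_m_def by (rule cINF_lower[OF _ iz]) (auto intro: bdd_belowI[where m=0])
    also have "\<dots> = 21/29 + 21/29 + 21/49 + real (n-3)" using S[of \<i>] by simp
    also have "\<dots> < real n - 1" using assms by simp
    finally show ?thesis .
  qed
  show ?thesis using isb M m by blast
qed

end
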